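(* Let $X$ be a compact metric space and $f:X\dashrightarrow X$ a continuous open-dense defined map which is good with respect to iterates. Let $\mu$ be an $f$-invariant Borel probability measure on $X$ with $\mu(I_\infty(f))=0$. Then there exists a unique Borel measure $\hat\mu$ on $\Gamma_{f,\infty}$ such that $(\pi_1)_*(\hat\mu)\le\mu$, $\hat\mu(\Gamma_{f,\infty})=1$ and $(\sigma_f)_*(\hat\mu)=\hat\mu$. Moreover $h_\mu(f)=h_{\hat\mu}(\sigma_f)$.
   Context: A continuous open-dense defined map $f:X\dashrightarrow X$ is a continuous map $f:\mathrm{OpenDom}(f)\to X$ with $\mathrm{OpenDom}(f)$ open dense; $I(f)=X\setminus\mathrm{OpenDom}(f)$. Let $\Omega_{f,\infty}=\{x\in\mathrm{OpenDom}(f):f^n(x)\notin I(f)\ \forall n\in\mathbb{N}\}$ and $I_\infty(f)=X\setminus\Omega_{f,\infty}$; $f$ is good with respect to iterates if $\Omega_{f,\infty}$ is dense and $I_\infty(f)$ is nowhere dense. $\Gamma_{f,\infty}$ is the closure in $X^{\mathbb{N}}$ (product topology, a compact metrizable space) of $\{(x,f(x),f^2(x),\ldots):x\in\Omega_{f,\infty}\}$; $\sigma_f:\Gamma_{f,\infty}\to\Gamma_{f,\infty}$ is the shift $(x_1,x_2,\ldots)\mapsto(x_2,x_3,\ldots)$ and $\pi_1(x_1,x_2,\ldots)=x_1$. $f$-invariance of $\mu$ means $f_*\mu=\mu$, where for a measure with no mass on $I(f)$, $f_*\mu(\varphi)=\int_{X\setminus I(f)}\varphi\circ f\,d\mu$.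 $h_\mu(f)$ is the Kolmogorov–Sinai entropy of the measure-preserving map $f:\Omega_{f,\infty}\to\Omega_{f,\infty}$ with respect to $\mu$, and $h_{\hat\mu}(\sigma_f)$ is the Kolmogorov–Sinai entropy of $\sigma_f$ with respect to $\hat\mu$. For measures, $\le$ means inequality of integrals against all continuous functions (equivalently on all Borel sets). *)

theory Defs
  imports "HOL-Probability.Probability"
begin

text \<open>A continuous open-dense defined map on the space (the type 'a) is given by
  its open dense domain D = OpenDom(f) and a function f that is continuous on D.
  The indeterminacy set is I(f) = - D.\<close>

definition open_dense_map :: "'a::topological_space set \<Rightarrow> ('a \<Rightarrow> 'a) \<Rightarrow> bool" where
  "open_dense_map D f \<longleftrightarrow> open D \<and> closure D = UNIV \<and> continuous_on D f"

definition indet :: "'a set \<Rightarrow> 'a set" where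
  "indet D = - D"

definition Omega_inf :: "'a set \<Rightarrow> ('a \<Rightarrow> 'a) \<Rightarrow> 'a set" where
  "Omega_inf D f = {x. \<forall>n. (f ^^ n) x \<in> D}"

definition I_inf :: "'a set \<Rightarrow> ('a \<Rightarrow> 'a) \<Rightarrow> 'a set" where
  "I_inf D f = - Omega_inf D f"

definition good_wrt_iterates :: "'a::topological_space set \<Rightarrow> ('a \<Rightarrow> 'a) \<Rightarrow> bool" where
  "good_wrt_iterates D f \<longleftrightarrow>
     closure (Omega_inf D f) = UNIV \<and> interior (closure (I_inf D f)) = {}"

text \<open>Gamma_{f,infinity}: closure in X^N (product topology on nat => 'a) of the orbits.
  Index 0 corresponds to the first coordinate x_1.\<close>
definition Gamma_inf :: "'a::topological_space set \<Rightarrow> ('a \<Rightarrow> 'a) \<Rightarrow> (nat \<Rightarrow> 'a) set" where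
  "Gamma_inf D f = closure ((\<lambda>x. \<lambda>n. (f ^^ n) x) ` Omega_inf D f)"

definition shift :: "(nat \<Rightarrow> 'a) \<Rightarrow> (nat \<Rightarrow> 'a)" where
  "shift s = (\<lambda>n. s (Suc n))"

definition pi1 :: "(nat \<Rightarrow> 'a) \<Rightarrow> 'a" where
  "pi1 s = s 0"

text \<open>Push-forward of a measure with no mass on I(f): f_* mu (A) = mu (f^{-1}(A) minus I(f)).\<close>
definition push_dom :: "'a set \<Rightarrow> ('a \<Rightarrow> 'b) \<Rightarrow> 'a measure \<Rightarrow> 'b::topological_space measure" where
  "push_dom D f M = distr (restrict_space M D) borel f"

definition finite_meas_partition :: "'a measure \<Rightarrow> 'a set set \<Rightarrow> bool" where
  "finite_meas_partition M P \<longleftrightarrow>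
     finite P \<and> P \<subseteq> sets M \<and> disjoint P \<and> \<Union>P = space M"

definition partition_entropy :: "'a measure \<Rightarrow> 'a set set \<Rightarrow> real" where
  "partition_entropy M P = (\<Sum>A\<in>P. - measure M A * ln (measure M A))"

definition join_iter :: "'a measure \<Rightarrow> ('a \<Rightarrow> 'a) \<Rightarrow> 'a set set \<Rightarrow> nat \<Rightarrow> 'a set set" where
  "join_iter M T P n =
     {(\<Inter>i<n. (T ^^ i) -` (a i)) \<inter> space M | a. \<forall>i<n. a i \<in> P} - {{}}"

definition entropy_partition :: "'a measure \<Rightarrow> ('a \<Rightarrow> 'a) \<Rightarrow> 'a set set \<Rightarrow> real" where
  "entropy_partition M T P =
     lim (\<lambda>n. partition_entropy M (join_iter M T P (Suc n)) / real (Suc n))"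

definition ks_entropy :: "'a measure \<Rightarrow> ('a \<Rightarrow> 'a) \<Rightarrow> ereal" where
  "ks_entropy M T =
     (SUP P\<in>{P. finite_meas_partition M P}. ereal (entropy_partition M T P))"

end

theory Submission
  imports Defs
begin



lemma measurable_funpow': "T \<in> measurable M M \<Longrightarrow> (T ^^ n) \<in> measurable M M"
proof (induction n)
  case 0 then show ?case by simp
next
  case (Suc n)
  then have "T \<circ> (T ^^ n) \<in> measurable M M" using measurable_comp by blast
  then show ?case by (simp only: funpow.simps(2))
qed

lemma join_image:
  "join_iter M T P n = (\<lambda>a. (\<Inter>i<n. (T ^^ i) -` a i) \<inter> space M) ` (PiE {..<n} (\<lambda>_. P)) - {{}}"
proof -
  let ?X = "\<lambda>a. (\<Inter>i<n. (T ^^ i) -` a i) \<inter> space M"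
  have eq: "{?X a | a. \<forall>i<n. a i \<in> P} = ?X ` (PiE {..<n} (\<lambda>_. P))"
  proof (intro set_eqI iffI)
    fix y assume "y \<in> {?X a | a. \<forall>i<n. a i \<in> P}"
    then obtain a where a: "\<forall>i<n. a i \<in> P" and y: "y = ?X a" by blast
    have r: "restrict a {..<n} \<in> PiE {..<n} (\<lambda>_. P)" using a by auto
    have "(\<Inter>i<n. (T ^^ i) -` restrict a {..<n} i) = (\<Inter>i<n. (T ^^ i) -` a i)"
      by (intro INF_cong refl) simp
    then have "?X (restrict a {..<n}) = ?X a" by (simp only:)
    then show "y \<in> ?X ` (PiE {..<n} (\<lambda>_. P))" unfolding y by (rule image_eqI[OF sym r])
  next
    fix y assume "y \<in> ?X ` (PiE {..<n} (\<lambda>_. P))"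
    then obtain b where b: "b \<in> PiE {..<n} (\<lambda>_. P)" and y: "y = ?X b" by blast
    have bi: "\<forall>i<n. b i \<in> P" using b by (simp add: PiE_iff)
    show "y \<in> {?X a | a. \<forall>i<n. a i \<in> P}" unfolding y by (intro CollectI exI[of _ b] conjI refl bi)
  qed
  show ?thesis unfolding join_iter_def eq ..
qed

lemma join_finite: "finite P \<Longrightarrow> finite (join_iter M T P n)"
  unfolding join_image by (intro finite_Diff finite_imageI finite_PiE finite_lessThan)

lemma join_disjoint:
  assumes d: "disjoint P"
  shows "disjoint (join_iter M T P n)"
  unfolding disjoint_def
proof (intro ballI impI)
  fix x y assume x: "x \<in> join_iter M T P n" and y: "y \<in> join_iter M T P n" and xy: "x \<noteq> y"
  obtain a where a: "\<forall>i<n. a i \<in> P" and xa: "x = (\<Inter>i<n. (T ^^ i) -` a i) \<inter> space M"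
    using x unfolding join_iter_def by blast
  obtain b where b: "\<forall>i<n. b i \<in> P" and yb: "y = (\<Inter>i<n. (T ^^ i) -` b i) \<inter> space M"
    using y unfolding join_iter_def by blast
  have "\<exists>i<n. a i \<noteq> b i"
  proof (rule ccontr)
    assume "\<not> (\<exists>i<n. a i \<noteq> b i)"
    then have "\<forall>i<n. a i = b i" by blast
    then have "(\<Inter>i<n. (T ^^ i) -` a i) = (\<Inter>i<n. (T ^^ i) -` b i)"
      by (intro INF_cong refl) simp
    then have "x = y" unfolding xa yb by (rule arg_cong)
    then show False using xy by blast
  qed
  then obtain i where i: "i < n" "a i \<noteq> b i" by blast
  have "a i \<inter> b i = {}" using d a b i unfolding disjoint_def by blast
  moreover have "x \<subseteq> (T ^^ i) -` a i" "y \<subseteq> (T ^^ i) -` b i"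
    using i(1) unfolding xa yb by auto
  ultimately show "x \<inter> y = {}" by blast
qed

lemma join_sets:
  assumes P: "P \<subseteq> sets M" and T: "T \<in> measurable M M"
  shows "join_iter M T P n \<subseteq> sets M"
proof
  fix x assume "x \<in> join_iter M T P n"
  then obtain a where a: "\<forall>i<n. a i \<in> P" and xa: "x = (\<Inter>i<n. (T ^^ i) -` a i) \<inter> space M"
    unfolding join_iter_def by blast
  show "x \<in> sets M"
  proof (cases "n = 0")
    case True then show ?thesis using xa by simp
  next
    case False
    have "x = (\<Inter>i\<in>{..<n}. (T ^^ i) -` a i \<inter> space M)" using xa False by auto
    also have "\<dots> \<in> sets M"
    proof (rule sets.finite_INT)
      show "finite {..<n}" by simp
      have "0 \<in> {..<n}" using False by simp
      then show "{..<n} \<noteq> {}" by blast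
      fix i assume "i \<in> {..<n}"
      then show "(T ^^ i) -` a i \<inter> space M \<in> sets M"
        using measurable_sets[OF measurable_funpow'[OF T]] a P by blast
    qed
    finally show ?thesis .
  qed
qed

lemma join_insert_empty: "join_iter M T (insert {} P) n = join_iter M T P n"
proof (intro set_eqI iffI)
  fix x assume "x \<in> join_iter M T (insert {} P) n"
  then obtain a where a: "\<forall>i<n. a i \<in> insert {} P" and xa: "x = (\<Inter>i<n. (T ^^ i) -` a i) \<inter> space M"
    and ne: "x \<noteq> {}"
    unfolding join_iter_def by blast
  have "\<forall>i<n. a i \<in> P"
  proof (intro allI impI)
    fix i assume i: "i < n"
    show "a i \<in> P"
    proof (rule ccontr)
      assume "a i \<notin> P"
      then have "a i = {}" using a i by blast
      then have "x = {}" using xa i by auto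
      then show False using ne by blast
    qed
  qed
  then show "x \<in> join_iter M T P n" using xa ne unfolding join_iter_def by blast
next
  fix x assume "x \<in> join_iter M T P n"
  then show "x \<in> join_iter M T (insert {} P) n" unfolding join_iter_def by blast
qed

lemma img_diff_empty: "g {} = {} \<Longrightarrow> g ` (S - {{}}) - {{}} = g ` S - {{}}"
  by auto

locale psetup =
  fixes D :: "'a::metric_space set" and f :: "'a \<Rightarrow> 'a" and \<mu> :: "'a measure"
  assumes opn: "open D" and cont: "continuous_on D f"
    and sets_mu: "sets \<mu> = sets borel" and prob: "prob_space \<mu>"
    and push: "push_dom D f \<mu> = \<mu>"
    and null: "emeasure \<mu> (I_inf D f) = 0"
begin

abbreviation "Om \<equiv> Omega_inf D f"
abbreviation "G \<equiv> Gamma_inf D f"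
definition "Phi x = (\<lambda>n. (f ^^ n) x)"

lemma fps: "(f ^^ Suc k) x = (f ^^ k) (f x)"
  by (simp only: funpow_Suc_right comp_apply)

lemma Om_D: "Om \<subseteq> D"
  unfolding Omega_inf_def by (auto dest: spec[of _ 0])

lemma Om_iff: "x \<in> Om \<longleftrightarrow> x \<in> D \<and> f x \<in> Om"
proof
  assume "x \<in> Om"
  then have a: "\<forall>n. (f ^^ n) x \<in> D" unfolding Omega_inf_def by simp
  have "x \<in> D" using a[rule_format, of 0] by simp
  moreover have "\<forall>n. (f ^^ n) (f x) \<in> D" using a by (simp only: fps[symmetric]) blast
  ultimately show "x \<in> D \<and> f x \<in> Om" unfolding Omega_inf_def by simp
next
  assume "x \<in> D \<and> f x \<in> Om"
  then have a: "x \<in> D" "\<forall>n. (f ^^ n) (f x) \<in> D" unfolding Omega_inf_def by simp_all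
  have "(f ^^ n) x \<in> D" for n
  proof (cases n)
    case 0 then show ?thesis using a by simp
  next
    case (Suc j) then show ?thesis using a(2) by (simp only: fps)
  qed
  then show "x \<in> Om" unfolding Omega_inf_def by simp
qed

lemma f_Om: "x \<in> Om \<Longrightarrow> f x \<in> Om"
  using Om_iff by blast

lemma funpow_Om: "x \<in> Om \<Longrightarrow> (f ^^ n) x \<in> Om"
  by (induction n) (auto simp: f_Om)

definition "E n = {x. \<forall>k\<le>n. (f ^^ k) x \<in> D}"

lemma E_Suc: "E (Suc n) = D \<inter> f -` E n"
proof (intro set_eqI iffI)
  fix x assume "x \<in> E (Suc n)"
  then have a: "\<forall>k\<le>Suc n. (f ^^ k) x \<in> D" unfolding E_def by simp
  have "x \<in> D" using a[rule_format, of 0] by simp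
  moreover have "(f ^^ k) (f x) \<in> D" if "k \<le> n" for k
    using a[rule_format, of "Suc k"] that by (simp only: fps)
  ultimately show "x \<in> D \<inter> f -` E n" unfolding E_def by simp
next
  fix x assume "x \<in> D \<inter> f -` E n"
  then have a: "x \<in> D" "\<forall>k\<le>n. (f ^^ k) (f x) \<in> D" unfolding E_def by simp_all
  have "(f ^^ k) x \<in> D" if k: "k \<le> Suc n" for k
  proof (cases k)
    case 0 then show ?thesis using a by simp
  next
    case (Suc j) then have "(f ^^ j) (f x) \<in> D" using a k by simp
    then show ?thesis using Suc by (simp only: fps)
  qed
  then show "x \<in> E (Suc n)" unfolding E_def by simp
qed

lemma E_open: "open (E n)"
proof (induction n)
  case 0 then show ?case using opn by (simp add: E_def)
next
  case (Suc n)
  have "open (D \<inter> f -` E n)" using continuous_on_open_vimage[OF opn, THEN iffD1, OF cont, rule_format, OF Suc] by (simp add: Int_commute)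
  then show ?case by (simp only: E_Suc)
qed

lemma Om_E: "Om = (\<Inter>n. E n)"
  unfolding Omega_inf_def E_def by auto

lemma Om_borel: "Om \<in> sets borel"
proof -
  have "E ` UNIV \<subseteq> sets borel" using E_open by auto
  then show ?thesis unfolding Om_E by (intro sets.countable_INT) auto
qed

lemma cont_funpow: "continuous_on Om (f ^^ n)"
proof (induction n)
  case 0 then show ?case by (simp add: continuous_on_id)
next
  case (Suc n)
  have "continuous_on Om (\<lambda>x. f ((f ^^ n) x))"
    by (rule continuous_on_compose2[OF cont Suc]) (use funpow_Om Om_D in auto)
  then show ?case by (simp add: o_def)
qed

lemma cont_Phi: "continuous_on Om Phi"
  unfolding Phi_def by (intro continuous_on_coordinatewise_then_product) (use cont_funpow in auto)

lemma Phi_G: "x \<in> Om \<Longrightarrow> Phi x \<in> G"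
  unfolding Gamma_inf_def Phi_def by (meson closure_subset image_eqI subsetD)

lemma G_closed: "closed G" unfolding Gamma_inf_def by simp
lemma G_borel: "G \<in> sets borel" using G_closed by auto


lemma space_mu: "space \<mu> = UNIV"
  using sets_eq_imp_space_eq[OF sets_mu] by simp

abbreviation "M1 \<equiv> restrict_space \<mu> Om"
abbreviation "Gs \<equiv> restrict_space (borel :: (nat \<Rightarrow> 'a) measure) G"

lemma space_M1: "space M1 = Om"
  by (simp add: space_restrict_space space_mu)

lemma Om_mu: "Om \<in> sets \<mu>" using Om_borel sets_mu by simp

lemma sets_M1: "A \<in> sets M1 \<longleftrightarrow> A \<in> sets borel \<and> A \<subseteq> Om"
  using sets_restrict_space_iff[of Om \<mu> A] Om_mu space_mu sets_mu by auto

lemma space_Gs: "space Gs = G"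
  by (simp add: space_restrict_space)

lemma sets_Gs: "A \<in> sets Gs \<longleftrightarrow> A \<in> sets borel \<and> A \<subseteq> G"
  using sets_restrict_space_iff[of G borel A] G_borel by auto

lemma Phi_meas: "Phi \<in> measurable M1 Gs"
proof (rule measurable_restrict_space2)
  show "Phi \<in> space M1 \<rightarrow> G" using Phi_G space_M1 by auto
  have "Phi \<in> borel_measurable (restrict_space borel Om)"
    by (rule borel_measurable_continuous_on_restrict[OF cont_Phi])
  moreover have "sets (restrict_space borel Om) = sets M1"
    by (rule sets_restrict_space_cong) (simp add: sets_mu)
  ultimately show "Phi \<in> borel_measurable M1"
    using measurable_cong_sets by blast
qed

lemma pi1_meas: "pi1 \<in> measurable Gs borel"
proof -
  have "continuous_on UNIV (pi1 :: (nat \<Rightarrow> 'a) \<Rightarrow> 'a)"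
    unfolding pi1_def by simp
  then have "pi1 \<in> borel_measurable (borel :: (nat \<Rightarrow> 'a) measure)"
    using borel_measurable_continuous_onI by blast
  then show ?thesis by (rule measurable_restrict_space1)
qed

lemma shift_Phi: "shift (Phi x) = Phi (f x)"
  unfolding shift_def Phi_def by (simp only: fps)

lemma cont_shift: "continuous_on S (shift :: (nat \<Rightarrow> 'a) \<Rightarrow> _)"
  unfolding shift_def
  by (intro continuous_on_coordinatewise_then_product continuous_on_subset[OF continuous_on_product_coordinates]) auto

lemma G_def': "G = closure (Phi ` Om)"
  unfolding Gamma_inf_def Phi_def[abs_def] ..

lemma shift_G: "shift ` G \<subseteq> G"
  unfolding G_def'
proof (rule image_closure_subset[OF cont_shift])
  show "closed (closure (Phi ` Om))" by simp
  show "shift ` Phi ` Om \<subseteq> closure (Phi ` Om)"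
    using shift_Phi f_Om closure_subset by fastforce
qed

lemma shift_meas: "shift \<in> measurable Gs Gs"
proof (rule measurable_restrict_space2)
  show "shift \<in> space Gs \<rightarrow> G" using shift_G space_Gs by auto
  have "shift \<in> borel_measurable (borel :: (nat \<Rightarrow> 'a) measure)"
    using borel_measurable_continuous_onI[OF cont_shift] by blast
  then show "shift \<in> measurable Gs borel" by (rule measurable_restrict_space1)
qed

lemma G_orbit_step:
  assumes s: "s \<in> G" and n: "s n \<in> D"
  shows "s (Suc n) = f (s n)"
proof -
  obtain y where y: "\<And>k. y k \<in> Phi ` Om" and lim: "y \<longlonglongrightarrow> s"
    using s unfolding G_def' closure_sequential by blast
  have coord: "isCont (\<lambda>t::nat\<Rightarrow>'a. t m) u" for m u
    using continuous_on_eq_continuous_at[of UNIV "\<lambda>t::nat\<Rightarrow>'a. t m"] by simp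
  have l1: "(\<lambda>k. y k n) \<longlonglongrightarrow> s n"
    using isCont_tendsto_compose[OF coord lim] .
  have l2: "(\<lambda>k. y k (Suc n)) \<longlonglongrightarrow> s (Suc n)"
    using isCont_tendsto_compose[OF coord lim] .
  have "isCont f (s n)"
    using continuous_on_eq_continuous_at[OF opn] cont n by blast
  then have l3: "(\<lambda>k. f (y k n)) \<longlonglongrightarrow> f (s n)"
    using isCont_tendsto_compose[OF _ l1] by blast
  have "y k (Suc n) = f (y k n)" for k
  proof -
    obtain x where "y k = Phi x" using y[of k] by blast
    then show ?thesis by (simp add: Phi_def)
  qed
  then have "(\<lambda>k. f (y k n)) \<longlonglongrightarrow> s (Suc n)" using l2 by simp
  then show ?thesis using l3 LIMSEQ_unique by blast
qed

lemma G_orbit: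
  assumes s: "s \<in> G" and s0: "s 0 \<in> Om"
  shows "s = Phi (s 0)"
proof
  fix n
  show "s n = Phi (s 0) n"
  proof (induction n)
    case 0 then show ?case by (simp add: Phi_def)
  next
    case (Suc n)
    have "s n \<in> D" using Suc funpow_Om[OF s0, of n] Om_D by (auto simp: Phi_def)
    then have "s (Suc n) = f (s n)" using G_orbit_step[OF s] by blast
    then show ?case using Suc by (simp add: Phi_def)
  qed
qed


definition "nu = distr M1 Gs Phi"

lemma sets_nu: "sets nu = sets Gs" unfolding nu_def by simp
lemma space_nu: "space nu = G" unfolding nu_def by (simp add: space_Gs)

lemma nu_emeasure: "A \<in> sets Gs \<Longrightarrow> emeasure nu A = emeasure \<mu> (Phi -` A \<inter> Om)"
  unfolding nu_def
  by (simp add: emeasure_distr[OF Phi_meas] space_M1 emeasure_restrict_space Om_mu space_mu)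

lemma pre_sets: "A \<in> sets Gs \<Longrightarrow> Phi -` A \<inter> Om \<in> sets borel"
  using measurable_sets[OF Phi_meas] space_M1 sets_M1 by metis

lemma mu_Om: "emeasure \<mu> Om = 1"
proof -
  have c: "- Om \<in> sets \<mu>" using Om_mu space_mu sets.compl_sets[of Om \<mu>] by (simp add: Compl_eq_Diff_UNIV)
  have "emeasure \<mu> (space \<mu> - (- Om)) = emeasure \<mu> (space \<mu>) - emeasure \<mu> (- Om)"
    by (rule emeasure_compl[OF c]) (simp add: null[unfolded I_inf_def])
  then show ?thesis using null prob_space.emeasure_space_1[OF prob]
    by (simp add: space_mu I_inf_def)
qed

lemma mu_nOm: "emeasure \<mu> (- Om) = 0" using null by (simp add: I_inf_def)

lemma pi1_Phi: "pi1 (Phi x) = x" by (simp add: pi1_def Phi_def)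

lemma pi1_meas': "sets N = sets Gs \<Longrightarrow> pi1 \<in> measurable N borel"
  using pi1_meas measurable_cong_sets by blast

lemma nu_P2: "A \<in> sets borel \<Longrightarrow> emeasure (distr nu borel pi1) A \<le> emeasure \<mu> A"
proof -
  assume A: "A \<in> sets borel"
  have m: "pi1 -` A \<inter> G \<in> sets Gs"
    using measurable_sets[OF pi1_meas A] space_Gs by simp
  have "emeasure (distr nu borel pi1) A = emeasure nu (pi1 -` A \<inter> G)"
    using emeasure_distr[OF pi1_meas'[OF sets_nu] A] space_nu by simp
  also have "\<dots> = emeasure \<mu> (Phi -` (pi1 -` A \<inter> G) \<inter> Om)" using nu_emeasure[OF m] .
  also have "\<dots> \<le> emeasure \<mu> A"
    by (rule emeasure_mono) (auto simp: pi1_Phi A sets_mu)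
  finally show ?thesis .
qed

lemma nu_P3: "emeasure nu G = 1"
proof -
  have "G \<in> sets Gs" using sets_Gs G_borel by simp
  then have "emeasure nu G = emeasure \<mu> (Phi -` G \<inter> Om)" by (rule nu_emeasure)
  also have "Phi -` G \<inter> Om = Om" using Phi_G by auto
  finally show ?thesis using mu_Om by simp
qed

lemma f_meas: "f \<in> measurable (restrict_space \<mu> D) borel"
proof -
  have "f \<in> borel_measurable (restrict_space borel D)"
    by (rule borel_measurable_continuous_on_restrict[OF cont])
  moreover have "sets (restrict_space borel D) = sets (restrict_space \<mu> D)"
    by (rule sets_restrict_space_cong) (simp add: sets_mu)
  ultimately show ?thesis using measurable_cong_sets by blast
qed

lemma push_eq: "B \<in> sets borel \<Longrightarrow> emeasure \<mu> (f -` B \<inter> D) = emeasure \<mu> B"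
proof -
  assume B: "B \<in> sets borel"
  have Dm: "D \<in> sets \<mu>" using opn sets_mu by simp
  have "emeasure (push_dom D f \<mu>) B = emeasure (restrict_space \<mu> D) (f -` B \<inter> space (restrict_space \<mu> D))"
    unfolding push_dom_def by (rule emeasure_distr[OF f_meas B])
  also have "\<dots> = emeasure \<mu> (f -` B \<inter> D)"
    by (simp add: space_restrict_space space_mu emeasure_restrict_space Dm)
  finally show ?thesis using push by simp
qed

lemma nu_P4: "distr nu Gs shift = nu"
proof (rule measure_eqI)
  show "sets (distr nu Gs shift) = sets nu" by (simp add: sets_nu)
  fix A assume "A \<in> sets (distr nu Gs shift)"
  then have A: "A \<in> sets Gs" by simp
  have sm: "shift \<in> measurable nu Gs" using shift_meas measurable_cong_sets[OF sets_nu refl] by blast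
  have A2: "shift -` A \<inter> G \<in> sets Gs" using measurable_sets[OF shift_meas A] space_Gs by simp
  have eq: "Phi -` (shift -` A \<inter> G) \<inter> Om = f -` (Phi -` A \<inter> Om) \<inter> D"
  proof (intro set_eqI iffI)
    fix x assume "x \<in> Phi -` (shift -` A \<inter> G) \<inter> Om"
    then have "x \<in> Om" "Phi (f x) \<in> A" using shift_Phi by auto
    then show "x \<in> f -` (Phi -` A \<inter> Om) \<inter> D" using Om_iff[of x] by blast
  next
    fix x assume x: "x \<in> f -` (Phi -` A \<inter> Om) \<inter> D"
    then have xo: "x \<in> Om" using Om_iff[of x] by blast
    have "Phi (f x) \<in> A" using x by blast
    then show "x \<in> Phi -` (shift -` A \<inter> G) \<inter> Om" using xo Phi_G[OF xo] shift_Phi[of x] by simp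
  qed
  have "emeasure (distr nu Gs shift) A = emeasure nu (shift -` A \<inter> G)"
    using emeasure_distr[OF sm A] space_nu by simp
  also have "\<dots> = emeasure \<mu> (f -` (Phi -` A \<inter> Om) \<inter> D)"
    using nu_emeasure[OF A2] eq by simp
  also have "\<dots> = emeasure \<mu> (Phi -` A \<inter> Om)" by (rule push_eq[OF pre_sets[OF A]])
  also have "\<dots> = emeasure nu A" using nu_emeasure[OF A] by simp
  finally show "emeasure (distr nu Gs shift) A = emeasure nu A" .
qed

lemma unique_le:
  assumes s: "sets \<nu>' = sets Gs"
    and le: "\<forall>A\<in>sets borel. emeasure (distr \<nu>' borel pi1) A \<le> emeasure \<mu> A"
    and A: "A \<in> sets Gs"
  shows "emeasure \<nu>' A \<le> emeasure nu A"
proof -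
  have sp: "space \<nu>' = G" using sets_eq_imp_space_eq[OF s] space_Gs by simp
  have pm: "pi1 \<in> measurable \<nu>' borel" by (rule pi1_meas'[OF s])
  have AG: "A \<subseteq> G" using A sets_Gs by auto
  have nOm: "- Om \<in> sets borel" using Om_borel by auto
  let ?N = "pi1 -` (- Om) \<inter> G"
  have Nm: "?N \<in> sets \<nu>'" using measurable_sets[OF pm nOm] sp by simp
  have "emeasure \<nu>' ?N = emeasure (distr \<nu>' borel pi1) (- Om)"
    using emeasure_distr[OF pm nOm] sp by simp
  also have "\<dots> \<le> 0" using le[rule_format, OF nOm] mu_nOm by simp
  finally have N0: "emeasure \<nu>' ?N = 0" by simp
  define B where "B = Phi -` A \<inter> Om"
  have Bm: "B \<in> sets borel" unfolding B_def by (rule pre_sets[OF A])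
  have Bs: "pi1 -` B \<inter> G \<in> sets \<nu>'" using measurable_sets[OF pm Bm] sp by simp
  have sub: "A \<subseteq> (pi1 -` B \<inter> G) \<union> ?N"
  proof
    fix s assume sA: "s \<in> A"
    then have sG: "s \<in> G" using AG by auto
    show "s \<in> (pi1 -` B \<inter> G) \<union> ?N"
    proof (cases "s 0 \<in> Om")
      case True
      then have "s = Phi (s 0)" using G_orbit[OF sG] by simp
      then have "Phi (pi1 s) \<in> A" using sA by (simp add: pi1_def)
      then show ?thesis using True sG by (simp add: B_def pi1_def)
    next
      case False then show ?thesis using sG by (simp add: pi1_def)
    qed
  qed
  have "emeasure \<nu>' A \<le> emeasure \<nu>' ((pi1 -` B \<inter> G) \<union> ?N)"
    by (rule emeasure_mono[OF sub]) (use Bs Nm in auto)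
  also have "\<dots> \<le> emeasure \<nu>' (pi1 -` B \<inter> G) + emeasure \<nu>' ?N"
    by (rule emeasure_subadditive[OF Bs Nm])
  also have "\<dots> = emeasure (distr \<nu>' borel pi1) B"
    using emeasure_distr[OF pm Bm] sp N0 by simp
  also have "\<dots> \<le> emeasure \<mu> B" using le Bm by blast
  also have "\<dots> = emeasure nu A" using nu_emeasure[OF A] by (simp add: B_def)
  finally show ?thesis .
qed

lemma unique:
  assumes s: "sets \<nu>' = sets Gs"
    and le: "\<forall>A\<in>sets borel. emeasure (distr \<nu>' borel pi1) A \<le> emeasure \<mu> A"
    and one: "emeasure \<nu>' G = 1"
  shows "\<nu>' = nu"
proof (rule measure_eqI)
  show "sets \<nu>' = sets nu" using s sets_nu by simp
  fix A assume "A \<in> sets \<nu>'"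
  then have A: "A \<in> sets Gs" using s by simp
  have sp: "space \<nu>' = G" using sets_eq_imp_space_eq[OF s] space_Gs by simp
  have AG: "A \<subseteq> G" using A sets_Gs by auto
  have GA: "G - A \<in> sets Gs" using A G_borel sets_Gs by auto
  have GAA: "G - (G - A) = A" using AG by auto
  have fin1: "emeasure \<nu>' (G - A) \<noteq> \<infinity>"
  proof -
    have "emeasure \<nu>' (G - A) \<le> emeasure \<nu>' G"
      by (rule emeasure_mono) (use sp sets.top[of \<nu>'] in auto)
    then have "emeasure \<nu>' (G - A) \<le> 1" using one by simp
    then have "emeasure \<nu>' (G - A) < top" using ennreal_one_less_top by (rule le_less_trans)
    then show ?thesis by simp
  qed
  have fin2: "emeasure nu (G - A) \<noteq> \<infinity>"
  proof -
    have "emeasure nu (G - A) \<le> emeasure nu G"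
      by (rule emeasure_mono) (use space_nu sets.top[of nu] in auto)
    then have "emeasure nu (G - A) \<le> 1" using nu_P3 by simp
    then have "emeasure nu (G - A) < top" using ennreal_one_less_top by (rule le_less_trans)
    then show ?thesis by simp
  qed
  have c1: "emeasure \<nu>' A = 1 - emeasure \<nu>' (G - A)"
    using emeasure_compl[of "G - A" \<nu>'] GA s fin1 sp one GAA by simp
  have c2: "emeasure nu A = 1 - emeasure nu (G - A)"
    using emeasure_compl[of "G - A" nu] GA sets_nu fin2 space_nu nu_P3 GAA by simp
  have "emeasure \<nu>' (G - A) \<le> emeasure nu (G - A)" by (rule unique_le[OF s le GA])
  then have "emeasure nu A \<le> emeasure \<nu>' A"
    unfolding c1 c2 by (intro ennreal_minus_mono) auto
  moreover have "emeasure \<nu>' A \<le> emeasure nu A" by (rule unique_le[OF s le A])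
  ultimately show "emeasure \<nu>' A = emeasure nu A" by simp
qed

definition "pre B = Phi -` B \<inter> Om"

lemma shift_pow_Phi: "(shift ^^ i) (Phi x) = Phi ((f ^^ i) x)"
proof (induction i)
  case 0 then show ?case by simp
next
  case (Suc i)
  have "(shift ^^ Suc i) (Phi x) = shift ((shift ^^ i) (Phi x))" by simp
  also have "\<dots> = Phi (f ((f ^^ i) x))" using Suc shift_Phi by simp
  also have "\<dots> = Phi ((f ^^ Suc i) x)" by simp
  finally show ?case .
qed

lemma pre_X: "pre ((\<Inter>i<n. (shift ^^ i) -` a i) \<inter> G) = (\<Inter>i<n. (f ^^ i) -` pre (a i)) \<inter> Om"
proof (intro set_eqI iffI)
  fix x assume "x \<in> pre ((\<Inter>i<n. (shift ^^ i) -` a i) \<inter> G)"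
  then have x: "x \<in> Om" "\<forall>i<n. (shift ^^ i) (Phi x) \<in> a i" unfolding pre_def by auto
  have "\<forall>i<n. (f ^^ i) x \<in> pre (a i)"
    using x shift_pow_Phi funpow_Om[OF x(1)] unfolding pre_def by simp
  then show "x \<in> (\<Inter>i<n. (f ^^ i) -` pre (a i)) \<inter> Om" using x(1) by blast
next
  fix x assume "x \<in> (\<Inter>i<n. (f ^^ i) -` pre (a i)) \<inter> Om"
  then have x: "x \<in> Om" "\<forall>i<n. (f ^^ i) x \<in> pre (a i)" by auto
  have "\<forall>i<n. (shift ^^ i) (Phi x) \<in> a i"
    using x(2) shift_pow_Phi unfolding pre_def by simp
  then show "x \<in> pre ((\<Inter>i<n. (shift ^^ i) -` a i) \<inter> G)"
    using x(1) Phi_G[OF x(1)] unfolding pre_def by blast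
qed

lemma pre_empty: "pre {} = {}" unfolding pre_def by simp

lemma join_pre: "join_iter M1 f (pre ` Q) n = pre ` join_iter nu shift Q n - {{}}"
proof -
  let ?X1 = "\<lambda>a. (\<Inter>i<n. (f ^^ i) -` a i) \<inter> Om"
  let ?X2 = "\<lambda>a. (\<Inter>i<n. (shift ^^ i) -` a i) \<inter> G"
  have eq: "{?X1 a | a. \<forall>i<n. a i \<in> pre ` Q} = pre ` {?X2 a | a. \<forall>i<n. a i \<in> Q}"
  proof (intro set_eqI iffI)
    fix y assume "y \<in> {?X1 a | a. \<forall>i<n. a i \<in> pre ` Q}"
    then obtain a' where a': "\<forall>i<n. a' i \<in> pre ` Q" and y: "y = ?X1 a'" by blast
    define a where "a i = (SOME b. b \<in> Q \<and> a' i = pre b)" for i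
    have ai: "a i \<in> Q \<and> a' i = pre (a i)" if "i < n" for i
    proof -
      have "\<exists>b. b \<in> Q \<and> a' i = pre b" using a' that by blast
      then show ?thesis unfolding a_def by (rule someI_ex)
    qed
    have "(\<Inter>i<n. (f ^^ i) -` a' i) = (\<Inter>i<n. (f ^^ i) -` pre (a i))"
      by (intro INF_cong refl) (simp add: ai)
    then have "y = pre (?X2 a)" unfolding y pre_X by (simp only:)
    moreover have aQ: "\<forall>i<n. a i \<in> Q" using ai by blast
    have "?X2 a \<in> {?X2 a | a. \<forall>i<n. a i \<in> Q}"
      by (intro CollectI exI[of _ a] conjI refl aQ)
    ultimately show "y \<in> pre ` {?X2 a | a. \<forall>i<n. a i \<in> Q}" by (rule image_eqI)
  next
    fix y assume "y \<in> pre ` {?X2 a | a. \<forall>i<n. a i \<in> Q}"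
    then obtain z where z: "z \<in> {?X2 a | a. \<forall>i<n. a i \<in> Q}" and yz: "y = pre z" by (rule imageE)
    from z obtain a where a: "\<forall>i<n. a i \<in> Q" and za: "z = ?X2 a" by blast
    have y: "y = pre (?X2 a)" using yz za by simp
    have y2: "y = ?X1 (\<lambda>i. pre (a i))" unfolding y pre_X ..
    have ai: "\<forall>i<n. pre (a i) \<in> pre ` Q" using a by blast
    show "y \<in> {?X1 a | a. \<forall>i<n. a i \<in> pre ` Q}"
      unfolding y2 by (intro CollectI exI[of _ "\<lambda>i. pre (a i)"] conjI refl ai)
  qed
  have "join_iter M1 f (pre ` Q) n = {?X1 a | a. \<forall>i<n. a i \<in> pre ` Q} - {{}}"
    unfolding join_iter_def space_M1 ..
  also have "\<dots> = pre ` {?X2 a | a. \<forall>i<n. a i \<in> Q} - {{}}" unfolding eq ..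
  also have "\<dots> = pre ` ({?X2 a | a. \<forall>i<n. a i \<in> Q} - {{}}) - {{}}"
    by (rule img_diff_empty[where g=pre, OF pre_empty, symmetric])
  also have "\<dots> = pre ` join_iter nu shift Q n - {{}}"
    unfolding join_iter_def space_nu ..
  finally show ?thesis .
qed

lemma shift_meas_nu: "shift \<in> measurable nu nu"
  using shift_meas measurable_cong_sets[OF sets_nu sets_nu] by blast

lemma measure_pre: "B \<in> sets nu \<Longrightarrow> measure M1 (pre B) = measure nu B"
  unfolding nu_def pre_def
  using measure_distr[OF Phi_meas, of B] sets_nu space_M1 by (simp add: nu_def)

lemma pe_eq:
  assumes Q: "finite_meas_partition nu Q"
  shows "partition_entropy M1 (join_iter M1 f (pre ` Q) n) = partition_entropy nu (join_iter nu shift Q n)"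
proof -
  let ?J = "join_iter nu shift Q n"
  let ?h1 = "\<lambda>A. - measure M1 A * ln (measure M1 A)"
  let ?h2 = "\<lambda>A. - measure nu A * ln (measure nu A)"
  have fin: "finite ?J" using Q join_finite unfolding finite_meas_partition_def by blast
  have dis: "disjoint ?J" using Q join_disjoint unfolding finite_meas_partition_def by blast
  have Js: "?J \<subseteq> sets nu" using Q join_sets[OF _ shift_meas_nu] unfolding finite_meas_partition_def by blast
  have h0: "?h1 {} = 0" by simp
  have "partition_entropy M1 (join_iter M1 f (pre ` Q) n) = sum ?h1 (pre ` ?J - {{}})"
    unfolding partition_entropy_def join_pre ..
  also have "\<dots> = sum ?h1 (pre ` ?J)"
    using sum_diff1[of "pre ` ?J" ?h1 "{}"] fin h0 by simp
  also have "\<dots> = sum (?h1 \<circ> pre) ?J"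
  proof (rule sum.reindex_nontrivial[OF fin])
    fix x y assume xy: "x \<in> ?J" "y \<in> ?J" "x \<noteq> y" "pre x = pre y"
    have "x \<inter> y = {}" using dis xy unfolding disjoint_def by blast
    then have "pre x = {}" using xy(4) unfolding pre_def by blast
    then show "?h1 (pre x) = 0" by simp
  qed
  also have "\<dots> = sum ?h2 ?J"
  proof (rule sum.cong[OF refl])
    fix B assume "B \<in> ?J"
    then have "B \<in> sets nu" using Js by blast
    then show "(?h1 \<circ> pre) B = ?h2 B" using measure_pre by simp
  qed
  also have "\<dots> = partition_entropy nu ?J" unfolding partition_entropy_def ..
  finally show ?thesis .
qed

lemma ep_eq:
  assumes Q: "finite_meas_partition nu Q"
  shows "entropy_partition M1 f (pre ` Q) = entropy_partition nu shift Q"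
  unfolding entropy_partition_def pe_eq[OF Q] ..

lemma part_pre:
  assumes Q: "finite_meas_partition nu Q"
  shows "finite_meas_partition M1 (pre ` Q)"
proof -
  have fin: "finite Q" and Qs: "Q \<subseteq> sets nu" and dis: "disjoint Q" and un: "\<Union>Q = space nu"
    using Q unfolding finite_meas_partition_def by auto
  have "finite (pre ` Q)" using fin by simp
  moreover have "pre ` Q \<subseteq> sets M1"
  proof
    fix y assume "y \<in> pre ` Q"
    then obtain B where B: "B \<in> Q" "y = pre B" by blast
    have "B \<in> sets Gs" using B Qs sets_nu by auto
    then show "y \<in> sets M1"
      using measurable_sets[OF Phi_meas] B space_M1 unfolding pre_def by metis
  qed
  moreover have "disjoint (pre ` Q)"
    unfolding disjoint_def
  proof (intro ballI impI)
    fix x y assume "x \<in> pre ` Q" "y \<in> pre ` Q" "x \<noteq> y"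
    then obtain a b where ab: "a \<in> Q" "b \<in> Q" "x = pre a" "y = pre b" "a \<noteq> b" by blast
    then have "a \<inter> b = {}" using dis unfolding disjoint_def by blast
    then show "x \<inter> y = {}" using ab unfolding pre_def by blast
  qed
  moreover have "\<Union>(pre ` Q) = space M1"
  proof -
    have "\<Union>(pre ` Q) = Phi -` (\<Union>Q) \<inter> Om" unfolding pre_def by blast
    also have "\<dots> = Om" using un space_nu Phi_G by auto
    finally show ?thesis using space_M1 by simp
  qed
  ultimately show ?thesis unfolding finite_meas_partition_def by blast
qed

lemma part_up:
  assumes P: "finite_meas_partition M1 P"
  shows "\<exists>Q. finite_meas_partition nu Q \<and> entropy_partition nu shift Q = entropy_partition M1 f P"
proof -
  have fin: "finite P" and Ps: "P \<subseteq> sets M1" and dis: "disjoint P" and un: "\<Union>P = Om"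
    using P space_M1 unfolding finite_meas_partition_def by auto
  have PO: "A \<subseteq> Om" if "A \<in> P" for A using that un by blast
  have Pb: "A \<in> sets borel" if "A \<in> P" for A using that Ps sets_M1 by blast
  define up where "up A = pi1 -` A \<inter> G" for A
  define N where "N = G - pi1 -` Om"
  define Q where "Q = insert N (up ` P)"
  have upm: "up A \<in> sets Gs" if "A \<in> P" for A
    using measurable_sets[OF pi1_meas Pb[OF that]] space_Gs unfolding up_def by simp
  have Nm: "N \<in> sets Gs"
  proof -
    have "pi1 -` Om \<inter> G \<in> sets Gs" using measurable_sets[OF pi1_meas Om_borel] space_Gs by simp
    then have "G - (pi1 -` Om \<inter> G) \<in> sets Gs" using sets.compl_sets[of _ Gs] space_Gs by simp
    moreover have "G - (pi1 -` Om \<inter> G) = N" unfolding N_def by blast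
    ultimately show ?thesis by simp
  qed
  have Qpart: "finite_meas_partition nu Q"
    unfolding finite_meas_partition_def
  proof (intro conjI)
    show "finite Q" unfolding Q_def using fin by simp
    show "Q \<subseteq> sets nu" unfolding Q_def sets_nu using upm Nm by blast
    show "disjoint Q"
      unfolding disjoint_def
    proof (intro ballI impI)
      fix x y assume x: "x \<in> Q" and y: "y \<in> Q" and xy: "x \<noteq> y"
      have upN: "up A \<inter> N = {}" if "A \<in> P" for A
        using PO[OF that] unfolding up_def N_def by auto
      show "x \<inter> y = {}"
      proof (cases "x = N")
        case True
        then have "y \<in> up ` P" using y xy unfolding Q_def by blast
        then show ?thesis using True upN by blast
      next
        case False
        then obtain A where A: "A \<in> P" "x = up A" using x unfolding Q_def by blast
        show ?thesis
        proof (cases "y = N")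
          case True then show ?thesis using A upN by blast
        next
          case False
          then obtain B where B: "B \<in> P" "y = up B" using y unfolding Q_def by blast
          then have "A \<noteq> B" using A xy by blast
          then have "A \<inter> B = {}" using dis A B unfolding disjoint_def by blast
          then show ?thesis using A B unfolding up_def by blast
        qed
      qed
    qed
    show "\<Union>Q = space nu"
    proof -
      have "\<Union>(up ` P) = pi1 -` Om \<inter> G" unfolding up_def using un by blast
      then have "\<Union>Q = G" unfolding Q_def N_def by blast
      then show ?thesis using space_nu by simp
    qed
  qed
  have preQ: "pre ` Q = insert {} P"
  proof -
    have "pre N = {}" unfolding pre_def N_def using pi1_Phi by auto
    moreover have "pre (up A) = A" if "A \<in> P" for A
      using PO[OF that] Phi_G pi1_Phi unfolding pre_def up_def by auto
    then have "pre ` up ` P = P" by force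
    ultimately show ?thesis unfolding Q_def by simp
  qed
  have "entropy_partition nu shift Q = entropy_partition M1 f (pre ` Q)"
    using ep_eq[OF Qpart] by simp
  also have "\<dots> = entropy_partition M1 f P"
    unfolding preQ entropy_partition_def join_insert_empty ..
  finally show ?thesis using Qpart by blast
qed

lemma ks_eq: "ks_entropy M1 f = ks_entropy nu shift"
  unfolding ks_entropy_def
proof (rule antisym)
  show "(SUP P\<in>{P. finite_meas_partition M1 P}. ereal (entropy_partition M1 f P))
        \<le> (SUP Q\<in>{Q. finite_meas_partition nu Q}. ereal (entropy_partition nu shift Q))"
  proof (rule SUP_least)
    fix P assume "P \<in> {P. finite_meas_partition M1 P}"
    then obtain Q where Q: "finite_meas_partition nu Q"
      "entropy_partition nu shift Q = entropy_partition M1 f P"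
      using part_up by blast
    then have "ereal (entropy_partition nu shift Q)
        \<le> (SUP Q\<in>{Q. finite_meas_partition nu Q}. ereal (entropy_partition nu shift Q))"
      by (intro SUP_upper) simp
    then show "ereal (entropy_partition M1 f P)
        \<le> (SUP Q\<in>{Q. finite_meas_partition nu Q}. ereal (entropy_partition nu shift Q))"
      using Q(2) by simp
  qed
next
  show "(SUP Q\<in>{Q. finite_meas_partition nu Q}. ereal (entropy_partition nu shift Q))
        \<le> (SUP P\<in>{P. finite_meas_partition M1 P}. ereal (entropy_partition M1 f P))"
  proof (rule SUP_least)
    fix Q assume "Q \<in> {Q. finite_meas_partition nu Q}"
    then have Q: "finite_meas_partition nu Q" by simp
    have "ereal (entropy_partition M1 f (pre ` Q))
        \<le> (SUP P\<in>{P. finite_meas_partition M1 P}. ereal (entropy_partition M1 f P))"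
      by (intro SUP_upper) (simp add: part_pre[OF Q])
    then show "ereal (entropy_partition nu shift Q)
        \<le> (SUP P\<in>{P. finite_meas_partition M1 P}. ereal (entropy_partition M1 f P))"
      using ep_eq[OF Q] by simp
  qed
qed

lemma main:
  "\<exists>\<nu> :: (nat \<Rightarrow> 'a) measure.
           (sets \<nu> = sets (restrict_space borel (Gamma_inf D f))
            \<and> (\<forall>A\<in>sets borel. emeasure (distr \<nu> borel pi1) A \<le> emeasure \<mu> A)
            \<and> emeasure \<nu> (Gamma_inf D f) = 1
            \<and> distr \<nu> (restrict_space borel (Gamma_inf D f)) shift = \<nu>)
         \<and> (\<forall>\<nu>' :: (nat \<Rightarrow> 'a) measure.
              sets \<nu>' = sets (restrict_space borel (Gamma_inf D f))
              \<and> (\<forall>A\<in>sets borel. emeasure (distr \<nu>' borel pi1) A \<le> emeasure \<mu> A)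
              \<and> emeasure \<nu>' (Gamma_inf D f) = 1
              \<and> distr \<nu>' (restrict_space borel (Gamma_inf D f)) shift = \<nu>'
              \<longrightarrow> \<nu>' = \<nu>)
         \<and> ks_entropy (restrict_space \<mu> (Omega_inf D f)) f = ks_entropy \<nu> shift"
proof (rule exI[of _ nu], intro conjI allI impI)
  show "sets nu = sets Gs" by (rule sets_nu)
  show "\<forall>A\<in>sets borel. emeasure (distr nu borel pi1) A \<le> emeasure \<mu> A" using nu_P2 by blast
  show "emeasure nu G = 1" by (rule nu_P3)
  show "distr nu Gs shift = nu" by (rule nu_P4)
  show "ks_entropy M1 f = ks_entropy nu shift" by (rule ks_eq)
  fix \<nu>' :: "(nat \<Rightarrow> 'a) measure"
  assume h: "sets \<nu>' = sets Gs
              \<and> (\<forall>A\<in>sets borel. emeasure (distr \<nu>' borel pi1) A \<le> emeasure \<mu> A)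
              \<and> emeasure \<nu>' G = 1
              \<and> distr \<nu>' Gs shift = \<nu>'"
  show "\<nu>' = nu" using unique h by blast
qed
end

theorem proposition1p6:
  fixes D :: "'a::metric_space set" and f :: "'a \<Rightarrow> 'a" and \<mu> :: "'a measure"
  assumes "compact (UNIV :: 'a set)"
    and "open_dense_map D f"
    and "good_wrt_iterates D f"
    and "sets \<mu> = sets borel" and "prob_space \<mu>"
    and "push_dom D f \<mu> = \<mu>"
    and "emeasure \<mu> (I_inf D f) = 0"
  shows "\<exists>\<nu> :: (nat \<Rightarrow> 'a) measure.
           (sets \<nu> = sets (restrict_space borel (Gamma_inf D f))
            \<and> (\<forall>A\<in>sets borel. emeasure (distr \<nu> borel pi1) A \<le> emeasure \<mu> A)
            \<and> emeasure \<nu> (Gamma_inf D f) = 1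
            \<and> distr \<nu> (restrict_space borel (Gamma_inf D f)) shift = \<nu>)
         \<and> (\<forall>\<nu>' :: (nat \<Rightarrow> 'a) measure.
              sets \<nu>' = sets (restrict_space borel (Gamma_inf D f))
              \<and> (\<forall>A\<in>sets borel. emeasure (distr \<nu>' borel pi1) A \<le> emeasure \<mu> A)
              \<and> emeasure \<nu>' (Gamma_inf D f) = 1
              \<and> distr \<nu>' (restrict_space borel (Gamma_inf D f)) shift = \<nu>'
              \<longrightarrow> \<nu>' = \<nu>)
         \<and> ks_entropy (restrict_space \<mu> (Omega_inf D f)) f = ks_entropy \<nu> shift"
proof -
  have "psetup D f \<mu>"
    unfolding psetup_def using assms by (simp add: open_dense_map_def)
  then show ?thesis by (rule psetup.main)
qed

end
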